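(* Let $n\ge 1$ be an integer. The game value of \textsc{Snort} played on the star $K_{1,n}$ with no tinted vertices is $\pm n = \{\, n \mid -n \,\}$.
   Context: \textsc{Snort} is a two-player normal-play combinatorial game (the player unable to move loses) between Left (blue) and Right (red), played on a finite simple graph in which each vertex may be tinted blue, tinted red, or untinted. Left may move on any vertex not tinted red; Right may move on any vertex not tinted blue. A move on vertex $v$ deletes $v$ and tints all neighbours of $v$ in the mover's colour; any vertex that thereby becomes tinted in both colours is deleted. Game values are in the standard sense of combinatorial game theory: $\{A \mid B\}$ denotes the game with Left options $A$ and Right options $B$, integers $n$ are the usual integer games, and $\pm G$ denotes $\{G \mid -G\}$. $K_{1,n}$ is the star with one centre vertex adjacent to $n$ leaves. *)

theory Defs
  imports Main
begin

datatype game = Game "game list" "game list"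

function game_le :: "game \<Rightarrow> game \<Rightarrow> bool" where
  "game_le (Game GL GR) (Game HL HR) \<longleftrightarrow>
     (\<forall>gl \<in> set GL. \<not> game_le (Game HL HR) gl) \<and>
     (\<forall>hr \<in> set HR. \<not> game_le hr (Game GL GR))"
  by pat_completeness auto
termination
  by (relation "measure (\<lambda>(G, H). size G + size H)")
     (auto dest!: size_list_estimation'[where f=size, OF _ order_refl])

definition game_eq :: "game \<Rightarrow> game \<Rightarrow> bool" where
  "game_eq G H \<longleftrightarrow> game_le G H \<and> game_le H G"

fun game_neg :: "game \<Rightarrow> game" where
  "game_neg (Game L R) = Game (map game_neg R) (map game_neg L)"

fun nat_game :: "nat \<Rightarrow> game" where
  "nat_game 0 = Game [] []"
| "nat_game (Suc n) = Game [nat_game n] []"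

definition int_game :: "int \<Rightarrow> game" where
  "int_game k = (if 0 \<le> k then nat_game (nat k) else game_neg (nat_game (nat (- k))))"

definition game_pm :: "game \<Rightarrow> game" where
  "game_pm G = Game [G] [game_neg G]"

datatype tint = Untinted | Blue | Red

text \<open>A Snort position: remaining vertex set V, the (symmetric, irreflexive)
  edge relation E of the original graph (restricted implicitly to V), and a tint
  for each vertex.  A Left move on v (v \<in> V, not tinted red) deletes v, tints its
  neighbours blue and deletes those neighbours that were red (they become tinted
  in both colours).\<close>

definition left_legal :: "nat set \<Rightarrow> (nat \<Rightarrow> tint) \<Rightarrow> nat \<Rightarrow> bool" where
  "left_legal V t v \<longleftrightarrow> v \<in> V \<and> t v \<noteq> Red"

definition right_legal :: "nat set \<Rightarrow> (nat \<Rightarrow> tint) \<Rightarrow> nat \<Rightarrow> bool" where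
  "right_legal V t v \<longleftrightarrow> v \<in> V \<and> t v \<noteq> Blue"

definition left_V :: "nat set \<Rightarrow> (nat \<times> nat) set \<Rightarrow> (nat \<Rightarrow> tint) \<Rightarrow> nat \<Rightarrow> nat set" where
  "left_V V E t v = V - {v} - {u \<in> V. (v, u) \<in> E \<and> t u = Red}"

definition left_t :: "(nat \<times> nat) set \<Rightarrow> (nat \<Rightarrow> tint) \<Rightarrow> nat \<Rightarrow> nat \<Rightarrow> tint" where
  "left_t E t v = (\<lambda>u. if (v, u) \<in> E then Blue else t u)"

definition right_V :: "nat set \<Rightarrow> (nat \<times> nat) set \<Rightarrow> (nat \<Rightarrow> tint) \<Rightarrow> nat \<Rightarrow> nat set" where
  "right_V V E t v = V - {v} - {u \<in> V. (v, u) \<in> E \<and> t u = Blue}"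

definition right_t :: "(nat \<times> nat) set \<Rightarrow> (nat \<Rightarrow> tint) \<Rightarrow> nat \<Rightarrow> nat \<Rightarrow> tint" where
  "right_t E t v = (\<lambda>u. if (v, u) \<in> E then Red else t u)"

text \<open>Game tree with a fuel parameter; every move deletes at least one vertex,
  so fuel card V suffices for a finite vertex set.\<close>
primrec snort_aux :: "nat \<Rightarrow> nat set \<Rightarrow> (nat \<times> nat) set \<Rightarrow> (nat \<Rightarrow> tint) \<Rightarrow> game" where
  "snort_aux 0 V E t = Game [] []"
| "snort_aux (Suc k) V E t =
     Game (map (\<lambda>v. snort_aux k (left_V V E t v) E (left_t E t v))
               (filter (left_legal V t) (sorted_list_of_set V)))
          (map (\<lambda>v. snort_aux k (right_V V E t v) E (right_t E t v))
               (filter (right_legal V t) (sorted_list_of_set V)))"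

definition snort :: "nat set \<Rightarrow> (nat \<times> nat) set \<Rightarrow> (nat \<Rightarrow> tint) \<Rightarrow> game" where
  "snort V E t = snort_aux (card V) V E t"

definition star_vertices :: "nat \<Rightarrow> nat set" where
  "star_vertices n = {0..n}"

definition star_edges :: "nat \<Rightarrow> (nat \<times> nat) set" where
  "star_edges n = {(0, i) | i. i \<in> {1..n}} \<union> {(i, 0) | i. i \<in> {1..n}}"

end

theory Submission
  imports Defs
begin

lemma le_leftD: "game_le (Game GL GR) H \<Longrightarrow> gl \<in> set GL \<Longrightarrow> \<not> game_le H gl"
  by (cases H) auto

lemma le_rightD: "game_le G (Game HL HR) \<Longrightarrow> hr \<in> set HR \<Longrightarrow> \<not> game_le hr G"
  by (cases G) auto

lemma le_intro: "(\<forall>gl\<in>set GL. \<not> game_le H gl) \<Longrightarrow> (\<forall>hr\<in>set HR. \<not> game_le hr (Game GL GR))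
   \<Longrightarrow> H = Game HL HR \<Longrightarrow> game_le (Game GL GR) H"
  by simp

lemma snort_Suc_left:
  assumes "v \<in> V" "finite V" "t v \<noteq> Red"
  shows "snort_aux k (left_V V E t v) E (left_t E t v) \<in> set (case snort_aux (Suc k) V E t of Game L R \<Rightarrow> L)"
  using assms by (auto simp: left_legal_def)

lemma snort_Suc_right:
  assumes "v \<in> V" "finite V" "t v \<noteq> Blue"
  shows "snort_aux k (right_V V E t v) E (right_t E t v) \<in> set (case snort_aux (Suc k) V E t of Game L R \<Rightarrow> R)"
  using assms by (auto simp: right_legal_def)

lemma snort_le_nat: "k \<le> m \<Longrightarrow> game_le (snort_aux k V E t) (nat_game m)"
proof (induction k arbitrary: V t m)
  case 0
  then show ?case by (cases m) simp_all
next
  case (Suc k)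
  then obtain m' where m: "m = Suc m'" "k \<le> m'" by (cases m) auto
  have "\<not> game_le (Game [nat_game m'] []) X" if "game_le X (nat_game m')" for X
    using le_leftD[where GL="[nat_game m']" and GR="[]" and H=X and gl="nat_game m'"] that by auto
  then show ?case unfolding m(1) snort_aux.simps nat_game.simps
    using Suc.IH[OF m(2)] by (simp only: game_le.simps) auto
qed

lemma neg_nat_le_snort: "k \<le> m \<Longrightarrow> game_le (game_neg (nat_game m)) (snort_aux k V E t)"
proof (induction k arbitrary: V t m)
  case 0
  then show ?case by (cases m) simp_all
next
  case (Suc k)
  then obtain m' where m: "m = Suc m'" "k \<le> m'" by (cases m) auto
  have "\<not> game_le X (Game [] [game_neg (nat_game m')])" if "game_le (game_neg (nat_game m')) X" for X
    using le_rightD[where HL="[]" and HR="[game_neg (nat_game m')]" and G=X and hr="game_neg (nat_game m')"] that by auto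
  then show ?case unfolding m(1) snort_aux.simps nat_game.simps game_neg.simps list.map
    using Suc.IH[OF m(2)] by (simp only: game_le.simps) auto
qed

lemma blue_lemma: "finite V \<Longrightarrow> card V \<le> k \<Longrightarrow> \<forall>u\<in>V. t u = Blue \<Longrightarrow>
   game_le (nat_game (card V)) (snort_aux k V E t)"
proof (induction k arbitrary: V t)
  case 0
  then show ?case by simp
next
  case (Suc k)
  have R: "filter (right_legal V t) (sorted_list_of_set V) = []"
    using Suc.prems by (auto simp: filter_empty_conv right_legal_def)
  show ?case
  proof (cases "V = {}")
    case True
    then show ?thesis by simp
  next
    case False
    then obtain v where v: "v \<in> V" by auto
    have lv: "left_V V E t v = V - {v}" using Suc.prems by (auto simp: left_V_def)
    have bl: "\<forall>u\<in>V - {v}. left_t E t v u = Blue" using Suc.prems by (auto simp: left_t_def)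
    have cV: "card V = Suc (card (V - {v}))" using v Suc.prems(1) by (metis card_Suc_Diff1)
    have IH: "game_le (nat_game (card (V - {v}))) (snort_aux k (V - {v}) E (left_t E t v))"
      using Suc.IH[of "V - {v}" "left_t E t v"] bl Suc.prems cV by simp
    have mem: "snort_aux k (V - {v}) E (left_t E t v) \<in> set (case snort_aux (Suc k) V E t of Game L R \<Rightarrow> L)"
      using snort_Suc_left[of v V t k E] v Suc.prems lv by auto
    have nle: "\<not> game_le (snort_aux (Suc k) V E t) (nat_game (card (V - {v})))"
    proof
      assume a: "game_le (snort_aux (Suc k) V E t) (nat_game (card (V - {v})))"
      obtain L R where LR: "snort_aux (Suc k) V E t = Game L R" by (cases "snort_aux (Suc k) V E t")
      show False using le_leftD[OF a[unfolded LR]] mem LR IH by auto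
    qed
    have GR: "snort_aux (Suc k) V E t = Game (case snort_aux (Suc k) V E t of Game L R \<Rightarrow> L) []"
      using R by simp
    show ?thesis unfolding cV nat_game.simps
      apply (subst GR)
      apply (rule le_intro)
      using nle GR by auto
  qed
qed

lemma red_lemma: "finite V \<Longrightarrow> card V \<le> k \<Longrightarrow> \<forall>u\<in>V. t u = Red \<Longrightarrow>
   game_le (snort_aux k V E t) (game_neg (nat_game (card V)))"
proof (induction k arbitrary: V t)
  case 0
  then show ?case by simp
next
  case (Suc k)
  have L: "filter (left_legal V t) (sorted_list_of_set V) = []"
    using Suc.prems by (auto simp: filter_empty_conv left_legal_def)
  show ?case
  proof (cases "V = {}")
    case True
    then show ?thesis by simp
  next
    case False
    then obtain v where v: "v \<in> V" by auto
    have lv: "right_V V E t v = V - {v}" using Suc.prems by (auto simp: right_V_def)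
    have bl: "\<forall>u\<in>V - {v}. right_t E t v u = Red" using Suc.prems by (auto simp: right_t_def)
    have cV: "card V = Suc (card (V - {v}))" using v Suc.prems(1) by (metis card_Suc_Diff1)
    have IH: "game_le (snort_aux k (V - {v}) E (right_t E t v)) (game_neg (nat_game (card (V - {v}))))"
      using Suc.IH[of "V - {v}" "right_t E t v"] bl Suc.prems cV by simp
    have mem: "snort_aux k (V - {v}) E (right_t E t v) \<in> set (case snort_aux (Suc k) V E t of Game L R \<Rightarrow> R)"
      using snort_Suc_right[of v V t k E] v Suc.prems lv by auto
    have nle: "\<not> game_le (game_neg (nat_game (card (V - {v})))) (snort_aux (Suc k) V E t)"
    proof
      assume a: "game_le (game_neg (nat_game (card (V - {v})))) (snort_aux (Suc k) V E t)"
      obtain L R where LR: "snort_aux (Suc k) V E t = Game L R" by (cases "snort_aux (Suc k) V E t")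
      show False using le_rightD[OF a[unfolded LR]] mem LR IH by auto
    qed
    have GL: "snort_aux (Suc k) V E t = Game [] (case snort_aux (Suc k) V E t of Game L R \<Rightarrow> R)"
      using L by simp
    show ?thesis unfolding cV nat_game.simps game_neg.simps list.map
      apply (subst GL)
      apply (rule le_intro)
      using nle GL by auto
  qed
qed

theorem lemma3:
  fixes n :: nat
  assumes "n \<ge> 1"
  shows "game_eq (snort (star_vertices n) (star_edges n) (\<lambda>_. Untinted))
                 (game_pm (int_game (int n)))"
proof -
  define V where "V = star_vertices n"
  define E where "E = star_edges n"
  define t0 where "t0 = (\<lambda>_::nat. Untinted)"
  define N where "N = nat_game n"
  have fin: "finite V" and cV: "card V = Suc n" by (auto simp: V_def star_vertices_def)
  have H: "game_pm (int_game (int n)) = Game [N] [game_neg N]"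
    by (simp add: game_pm_def int_game_def N_def)
  obtain GL GR where G: "snort_aux (Suc n) V E t0 = Game GL GR"
    by (cases "snort_aux (Suc n) V E t0")
  have GL: "\<forall>gl\<in>set GL. \<exists>V' t'. gl = snort_aux n V' E t'" using G by fastforce
  have GR: "\<forall>gr\<in>set GR. \<exists>V' t'. gr = snort_aux n V' E t'" using G by fastforce
  have z: "0 \<in> V" by (simp add: V_def star_vertices_def)
  have l0: "snort_aux n (left_V V E t0 0) E (left_t E t0 0) \<in> set GL"
    using snort_Suc_left[OF z fin, of t0 n E] unfolding G by (simp add: t0_def)
  have r0: "snort_aux n (right_V V E t0 0) E (right_t E t0 0) \<in> set GR"
    using snort_Suc_right[OF z fin, of t0 n E] unfolding G by (simp add: t0_def)
  have lV: "left_V V E t0 0 = {1..n}" by (auto simp: left_V_def V_def star_vertices_def t0_def)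
  have rV: "right_V V E t0 0 = {1..n}" by (auto simp: right_V_def V_def star_vertices_def t0_def)
  have lt: "\<forall>u\<in>{1..n}. left_t E t0 0 u = Blue" by (auto simp: left_t_def E_def star_edges_def)
  have rt: "\<forall>u\<in>{1..n}. right_t E t0 0 u = Red" by (auto simp: right_t_def E_def star_edges_def)
  have B: "game_le N (snort_aux n (left_V V E t0 0) E (left_t E t0 0))"
    using blue_lemma[of "{1..n}" n "left_t E t0 0" E] lV lt by (simp add: N_def)
  have R: "game_le (snort_aux n (right_V V E t0 0) E (right_t E t0 0)) (game_neg N)"
    using red_lemma[of "{1..n}" n "right_t E t0 0" E] rV rt by (simp add: N_def)
  have le1: "game_le (Game GL GR) (Game [N] [game_neg N])"
  proof (rule le_intro)
    show "\<forall>gl\<in>set GL. \<not> game_le (Game [N] [game_neg N]) gl"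
    proof
      fix gl assume gl: "gl \<in> set GL"
      then obtain V' t' where e: "gl = snort_aux n V' E t'" using GL by blast
      have "game_le gl N" unfolding e N_def by (rule snort_le_nat) simp
      then show "\<not> game_le (Game [N] [game_neg N]) gl"
        using le_leftD[of "[N]" "[game_neg N]" gl N] by auto
    qed
    show "\<forall>hr\<in>set [game_neg N]. \<not> game_le hr (Game GL GR)"
      using le_rightD[of "game_neg N" GL GR] r0 R by auto
  qed simp
  have le2: "game_le (Game [N] [game_neg N]) (Game GL GR)"
  proof (rule le_intro)
    show "\<forall>gl\<in>set [N]. \<not> game_le (Game GL GR) gl"
      using le_leftD[of GL GR N] l0 B by auto
    show "\<forall>hr\<in>set GR. \<not> game_le hr (Game [N] [game_neg N])"
    proof
      fix gr assume gr: "gr \<in> set GR"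
      then obtain V' t' where e: "gr = snort_aux n V' E t'" using GR by blast
      have "game_le (game_neg N) gr" unfolding e N_def by (rule neg_nat_le_snort) simp
      then show "\<not> game_le gr (Game [N] [game_neg N])"
        using le_rightD[of gr "[N]" "[game_neg N]" "game_neg N"] by auto
    qed
  qed simp
  show ?thesis
    unfolding game_eq_def snort_def H
    using le1 le2 G cV by (simp add: V_def E_def t0_def)
qed

end
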